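(* Let $\epsilon>0$ and let $a,b,c,d\in\Lambda_+$ satisfy: (1) $ad-bc\neq0$; (2) $\mathrm{val}(a)\le\mathrm{val}(b),\mathrm{val}(c)$ and $\mathrm{val}(d)\le\mathrm{val}(b),\mathrm{val}(c)$; (3) $\mathrm{val}(a)+\mathrm{val}(d)<\mathrm{val}(b)+\mathrm{val}(c)$. Let $$F(z_1,z_2)=\Bigl(az_1+bz_2+\sum_{v}\lambda_vz^v,\ cz_1+dz_2+\sum_v\eta_vz^v\Bigr),$$ where $v=(v_1,v_2)$ ranges over $\mathbb Z_{\ge0}^2$ with $v_1+v_2\ge2$, $z^v=z_1^{v_1}z_2^{v_2}$, and the coefficients satisfy $\mathrm{val}(\lambda_v)\ge\mathrm{val}(a)$, $\mathrm{val}(\eta_v)\ge\mathrm{val}(d)$ for all $v$, and (4) $\mathrm{val}(\lambda_{(i,j)})\ge\mathrm{val}(d)$ whenever $j\ge1$ and $\mathrm{val}(\eta_{(i,j)})\ge\mathrm{val}(a)$ whenever $i\ge1$. Then for all $C_1,C_2\in\Lambda$ with $\mathrm{val}(C_1)>\mathrm{val}(a)+\epsilon$ and $\mathrm{val}(C_2)>\mathrm{val}(d)+\epsilon$, the equation $F(z_1,z_2)=(C_1,C_2)$ has a unique solution $(z_1,z_2)\in(T^\epsilon\Lambda_0)^2$.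
   Context: $\Lambda$ is the Novikov field $\{\sum_{i\ge0}c_iT^{\lambda_i}: c_i\in\mathbb C,\ \lambda_i\to\infty\}$, $\mathrm{val}(\sum c_iT^{\lambda_i})=\min\{\lambda_i:c_i\ne0\}$ (with $\mathrm{val}(0)=\infty$), $\Lambda_0=\{\mathrm{val}\ge0\}$, $\Lambda_+=\{\mathrm{val}>0\}$, and $T^\epsilon\Lambda_0=\{x:\mathrm{val}(x)\ge\epsilon\}$. The series defining $F$ converge in the $T$-adic topology on $(T^\epsilon\Lambda_0)^2$. *)

theory Defs
  imports Complex_Main "HOL-Library.Extended_Real"
begin

text \<open>Universal Novikov field, represented by coefficient functions:
  an element \<open>\<Sum> c_i T^{\<lambda>_i}\<close> is the function \<open>\<lambda> \<mapsto> c\<close> (coefficient of \<open>T^\<lambda>\<close>),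
  with finitely many nonzero coefficients below any bound (i.e. \<open>\<lambda>_i \<rightarrow> \<infinity>\<close>).\<close>

type_synonym nov = "real \<Rightarrow> complex"

definition novikov :: "nov set" where
  "novikov = {f. \<forall>R. finite {x. f x \<noteq> 0 \<and> x \<le> R}}"

definition nval :: "nov \<Rightarrow> ereal" where
  "nval f = (INF x\<in>{x. f x \<noteq> 0}. ereal x)"

definition nzero :: nov where "nzero = (\<lambda>x. 0)"

definition none :: nov where "none = (\<lambda>x. if x = 0 then 1 else 0)"

definition nadd :: "nov \<Rightarrow> nov \<Rightarrow> nov" where
  "nadd f g = (\<lambda>x. f x + g x)"

definition nmul :: "nov \<Rightarrow> nov \<Rightarrow> nov" where
  "nmul f g = (\<lambda>x. \<Sum>y\<in>{y. f y \<noteq> 0 \<and> g (x - y) \<noteq> 0}. f y * g (x - y))"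

definition npow :: "nov \<Rightarrow> nat \<Rightarrow> nov" where
  "npow f n = (nmul f ^^ n) none"

text \<open>Sum of a family of Novikov elements, taken coefficientwise (this is the T-adic
  limit whenever the family converges, i.e. valuations tend to infinity).\<close>
definition nsuminf :: "('i \<Rightarrow> nov) \<Rightarrow> nov" where
  "nsuminf t = (\<lambda>x. \<Sum>i\<in>{i. t i x \<noteq> 0}. t i x)"

definition Lambda0 :: "nov set" where
  "Lambda0 = {x \<in> novikov. nval x \<ge> 0}"

definition Lambda_plus :: "nov set" where
  "Lambda_plus = {x \<in> novikov. nval x > 0}"

definition TLambda0 :: "real \<Rightarrow> nov set" where
  "TLambda0 e = {x \<in> novikov. nval x \<ge> ereal e}"

definition nser :: "(nat \<times> nat \<Rightarrow> nov) \<Rightarrow> nov \<Rightarrow> nov \<Rightarrow> nov" where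
  "nser lam z1 z2 = nsuminf (\<lambda>v::nat \<times> nat. if 2 \<le> fst v + snd v
      then nmul (lam v) (nmul (npow z1 (fst v)) (npow z2 (snd v))) else nzero)"

definition novF :: "nov \<Rightarrow> nov \<Rightarrow> nov \<Rightarrow> nov \<Rightarrow> (nat \<times> nat \<Rightarrow> nov) \<Rightarrow> (nat \<times> nat \<Rightarrow> nov)
    \<Rightarrow> nov \<Rightarrow> nov \<Rightarrow> nov \<times> nov" where
  "novF a b c d lam eta z1 z2 =
     (nadd (nadd (nmul a z1) (nmul b z2)) (nser lam z1 z2),
      nadd (nadd (nmul c z1) (nmul d z2)) (nser eta z1 z2))"

end

theory Submission
  imports Defs
begin

definition lb :: "real \<Rightarrow> nov \<Rightarrow> bool" where
  "lb B f \<longleftrightarrow> (\<forall>x. f x \<noteq> 0 \<longrightarrow> B \<le> x)"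

lemma lb_iff_nval: "ereal B \<le> nval f \<longleftrightarrow> lb B f"
  by (auto simp: nval_def lb_def le_INF_iff)

lemma lb_mono: "lb B f \<Longrightarrow> B' \<le> B \<Longrightarrow> lb B' f"
  by (auto simp: lb_def)

lemma lb_zero: "(\<And>x. f x = 0) \<Longrightarrow> lb B f"
  by (auto simp: lb_def)

lemma lb_add: "lb B f \<Longrightarrow> lb C g \<Longrightarrow> lb (min B C) (\<lambda>x. f x + g x)"
  unfolding lb_def by (metis add.right_neutral add_0 min.coboundedI1 min.coboundedI2)

lemma lb_diff: "lb B f \<Longrightarrow> lb C g \<Longrightarrow> lb (min B C) (\<lambda>x. f x - g x)"
  unfolding lb_def by (metis diff_0 diff_zero min.coboundedI1 min.coboundedI2 neg_equal_0_iff_equal)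

lemma lb_neg: "lb B f \<Longrightarrow> lb B (\<lambda>x. - f x)"
  unfolding lb_def by auto

lemma lb_none: "lb 0 none"
  by (auto simp: lb_def none_def)

lemma lb_shift: "lb B f \<Longrightarrow> lb (B - s) (\<lambda>y. c * f (y + s))"
  unfolding lb_def by force

lemma nov_bdd: assumes "f \<in> novikov" shows "\<exists>m. lb m f"
proof (cases "\<exists>x0. f x0 \<noteq> 0")
  case False then show ?thesis by (auto simp: lb_def)
next
  case True
  then obtain x0 where x0: "f x0 \<noteq> 0" by blast
  let ?S = "{x. f x \<noteq> 0 \<and> x \<le> x0}"
  have fin: "finite ?S" using assms by (auto simp: novikov_def)
  have ne: "x0 \<in> ?S" using x0 by auto
  have "lb (Min ?S) f"
    unfolding lb_def
  proof (intro allI impI)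
    fix x assume "f x \<noteq> 0"
    show "Min ?S \<le> x"
    proof (cases "x \<le> x0")
      case True then show ?thesis using fin \<open>f x \<noteq> 0\<close> by (intro Min_le) auto
    next
      case False then show ?thesis using fin ne Min_le[OF fin ne] by linarith
    qed
  qed
  then show ?thesis by blast
qed

lemma nov_min: assumes "f \<in> novikov" "f x0 \<noteq> 0"
  shows "\<exists>m. f m \<noteq> 0 \<and> lb m f"
proof -
  let ?S = "{x. f x \<noteq> 0 \<and> x \<le> x0}"
  have fin: "finite ?S" using assms by (auto simp: novikov_def)
  have ne: "x0 \<in> ?S" using assms by auto
  have m: "Min ?S \<in> ?S" using fin ne by (intro Min_in) auto
  have "lb (Min ?S) f"
    unfolding lb_def
  proof (intro allI impI)
    fix x assume "f x \<noteq> 0"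
    show "Min ?S \<le> x"
    proof (cases "x \<le> x0")
      case True then show ?thesis using fin \<open>f x \<noteq> 0\<close> by (intro Min_le) auto
    next
      case False then show ?thesis using fin ne Min_le[OF fin ne] by linarith
    qed
  qed
  then show ?thesis using m by blast
qed

lemma nval_lead: assumes "f \<in> novikov" "nval f = ereal A"
  shows "f A \<noteq> 0" "lb A f"
proof -
  have "lb A f" using assms(2) lb_iff_nval[of A f] by simp
  have "\<exists>x0. f x0 \<noteq> 0"
  proof (rule ccontr)
    assume "\<not> ?thesis"
    then have "nval f = \<infinity>" by (simp add: nval_def top_ereal_def)
    then show False using assms(2) by simp
  qed
  then obtain m where m: "f m \<noteq> 0" "lb m f" using nov_min assms(1) by blast
  have "ereal m \<le> nval f" using m(2) lb_iff_nval by blast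
  moreover have "nval f \<le> ereal m" using m(1) unfolding nval_def by (intro INF_lower) auto
  ultimately have "A = m" using assms(2) by simp
  then show "f A \<noteq> 0" using m by simp
  show "lb A f" by fact
qed

lemma nov_gap: assumes "f \<in> novikov" "lb t f" "f t = 0"
  shows "\<exists>\<theta>>0. lb (t + \<theta>) f"
proof (cases "\<exists>x0. f x0 \<noteq> 0")
  case False then show ?thesis by (intro exI[of _ 1]) (auto simp: lb_def)
next
  case True
  then obtain m where m: "f m \<noteq> 0" "lb m f" using nov_min assms(1) by blast
  have "t \<le> m" using assms(2) m(1) by (auto simp: lb_def)
  moreover have "m \<noteq> t" using m(1) assms(3) by auto
  ultimately show ?thesis using m(2) by (intro exI[of _ "m - t"]) auto
qed

lemma novI2: assumes "\<And>R. {x. f x \<noteq> 0 \<and> x \<le> R} \<subseteq> S R" "\<And>R. finite (S R)"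
  shows "f \<in> novikov"
  unfolding novikov_def
proof (intro CollectI allI)
  fix R show "finite {x. f x \<noteq> 0 \<and> x \<le> R}" by (rule finite_subset[OF assms(1) assms(2)])
qed

lemma nov_zero[simp]: "(\<lambda>x. 0) \<in> novikov"
  by (simp add: novikov_def)

lemma nzero_nov[simp]: "nzero \<in> novikov"
  by (simp add: novikov_def nzero_def)

lemma none_nov[simp]: "none \<in> novikov"
  by (rule novI2[of _ "\<lambda>R. {0}"]) (auto simp: none_def)

lemma nov_add: assumes "f \<in> novikov" "g \<in> novikov" shows "(\<lambda>x. f x + g x) \<in> novikov"
proof -
  have "{x. f x + g x \<noteq> 0 \<and> x \<le> R} \<subseteq> {x. f x \<noteq> 0 \<and> x \<le> R} \<union> {x. g x \<noteq> 0 \<and> x \<le> R}" for R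
    by auto
  moreover have "finite ({x. f x \<noteq> 0 \<and> x \<le> R} \<union> {x. g x \<noteq> 0 \<and> x \<le> R})" for R
    using assms by (simp add: novikov_def)
  ultimately show ?thesis by (rule novI2)
qed

lemma nov_diff: assumes "f \<in> novikov" "g \<in> novikov" shows "(\<lambda>x. f x - g x) \<in> novikov"
proof -
  have "{x. f x - g x \<noteq> 0 \<and> x \<le> R} \<subseteq> {x. f x \<noteq> 0 \<and> x \<le> R} \<union> {x. g x \<noteq> 0 \<and> x \<le> R}" for R
    by auto
  moreover have "finite ({x. f x \<noteq> 0 \<and> x \<le> R} \<union> {x. g x \<noteq> 0 \<and> x \<le> R})" for R
    using assms by (simp add: novikov_def)
  ultimately show ?thesis by (rule novI2)
qed

lemma nov_shift: assumes "f \<in> novikov" shows "(\<lambda>y. c * f (y + s)) \<in> novikov"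
proof -
  have "{x. c * f (x + s) \<noteq> 0 \<and> x \<le> R} \<subseteq> (\<lambda>y. y - s) ` {y. f y \<noteq> 0 \<and> y \<le> R + s}" for R
  proof
    fix x assume "x \<in> {x. c * f (x + s) \<noteq> 0 \<and> x \<le> R}"
    then show "x \<in> (\<lambda>y. y - s) ` {y. f y \<noteq> 0 \<and> y \<le> R + s}"
      by (intro image_eqI[of _ _ "x + s"]) auto
  qed
  moreover have "finite ((\<lambda>y. y - s) ` {y. f y \<noteq> 0 \<and> y \<le> R + s})" for R
    using assms by (simp add: novikov_def)
  ultimately show ?thesis by (rule novI2)
qed

lemma fin_conv: assumes "f \<in> novikov" "g \<in> novikov"
  shows "finite {y. f y \<noteq> 0 \<and> g (x - y) \<noteq> 0}"
proof -
  obtain m where m: "lb m g" using nov_bdd assms(2) by blast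
  have "{y. f y \<noteq> 0 \<and> g (x - y) \<noteq> 0} \<subseteq> {y. f y \<noteq> 0 \<and> y \<le> x - m}"
    using m by (auto simp: lb_def)
  moreover have "finite {y. f y \<noteq> 0 \<and> y \<le> x - m}" using assms(1) by (simp add: novikov_def)
  ultimately show ?thesis by (rule finite_subset)
qed

lemma nmul_superset: assumes "finite K" "\<And>y. f y \<noteq> 0 \<Longrightarrow> g (x - y) \<noteq> 0 \<Longrightarrow> y \<in> K"
  shows "nmul f g x = (\<Sum>y\<in>K. f y * g (x - y))"
  unfolding nmul_def using assms by (intro sum.mono_neutral_left) auto

lemma nmul_nz: assumes "nmul f g x \<noteq> 0" shows "\<exists>y. f y \<noteq> 0 \<and> g (x - y) \<noteq> 0"
proof (rule ccontr)
  assume "\<not> ?thesis"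
  then have e: "{y. f y \<noteq> 0 \<and> g (x - y) \<noteq> 0} = {}" by auto
  have "nmul f g x = 0" unfolding nmul_def e by simp
  then show False using assms by simp
qed

lemma lb_mul: "lb B f \<Longrightarrow> lb C g \<Longrightarrow> lb (B + C) (nmul f g)"
  unfolding lb_def
proof (intro allI impI)
  fix x assume a: "\<forall>x. f x \<noteq> 0 \<longrightarrow> B \<le> x" "\<forall>x. g x \<noteq> 0 \<longrightarrow> C \<le> x" "nmul f g x \<noteq> 0"
  then obtain y where "f y \<noteq> 0" "g (x - y) \<noteq> 0" using nmul_nz by blast
  then have "B \<le> y" "C \<le> x - y" using a(1,2) by auto
  then show "B + C \<le> x" by linarith
qed

lemma nmul_zero_right: "nmul f (\<lambda>_. 0) x = 0"
  by (simp add: nmul_def)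
lemma nmul_zero_left: "nmul (\<lambda>_. 0) g x = 0"
  by (simp add: nmul_def)

lemma nov_mul: assumes "f \<in> novikov" "g \<in> novikov" shows "nmul f g \<in> novikov"
proof -
  obtain mf where mf: "lb mf f" using nov_bdd assms(1) by blast
  obtain mg where mg: "lb mg g" using nov_bdd assms(2) by blast
  have "{x. nmul f g x \<noteq> 0 \<and> x \<le> R} \<subseteq> (\<lambda>(y, w). y + w) ` ({y. f y \<noteq> 0 \<and> y \<le> R - mg} \<times> {w. g w \<noteq> 0 \<and> w \<le> R - mf})" for R
  proof
    fix x assume "x \<in> {x. nmul f g x \<noteq> 0 \<and> x \<le> R}"
    then have x: "nmul f g x \<noteq> 0" "x \<le> R" by auto
    then obtain y where y: "f y \<noteq> 0" "g (x - y) \<noteq> 0" using nmul_nz by blast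
    have "mg \<le> x - y" "mf \<le> y" using y mf mg by (auto simp: lb_def)
    then show "x \<in> (\<lambda>(y, w). y + w) ` ({y. f y \<noteq> 0 \<and> y \<le> R - mg} \<times> {w. g w \<noteq> 0 \<and> w \<le> R - mf})"
      using y x by (intro image_eqI[of _ _ "(y, x - y)"]) auto
  qed
  moreover have "finite ((\<lambda>(y, w). y + w) ` ({y. f y \<noteq> 0 \<and> y \<le> R - mg} \<times> {w. g w \<noteq> 0 \<and> w \<le> R - mf}))" for R
    using assms unfolding novikov_def by (intro finite_imageI finite_cartesian_product) auto
  ultimately show ?thesis by (rule novI2)
qed

lemma nmul_add_right: assumes "f \<in> novikov" "g \<in> novikov" "h \<in> novikov"
  shows "nmul f (\<lambda>y. g y + h y) x = nmul f g x + nmul f h x"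
proof -
  let ?K = "{y. f y \<noteq> 0 \<and> g (x - y) \<noteq> 0} \<union> {y. f y \<noteq> 0 \<and> h (x - y) \<noteq> 0}"
  have fin: "finite ?K" using fin_conv assms by auto
  have "nmul f (\<lambda>y. g y + h y) x = (\<Sum>y\<in>?K. f y * (g (x - y) + h (x - y)))"
    by (rule nmul_superset[OF fin]) auto
  also have "\<dots> = (\<Sum>y\<in>?K. f y * g (x - y)) + (\<Sum>y\<in>?K. f y * h (x - y))"
    by (simp add: distrib_left sum.distrib)
  also have "\<dots> = nmul f g x + nmul f h x"
    by (simp add: nmul_superset[OF fin])
  finally show ?thesis .
qed

lemma nmul_diff_right: assumes "f \<in> novikov" "g \<in> novikov" "h \<in> novikov"
  shows "nmul f (\<lambda>y. g y - h y) x = nmul f g x - nmul f h x"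
proof -
  let ?K = "{y. f y \<noteq> 0 \<and> g (x - y) \<noteq> 0} \<union> {y. f y \<noteq> 0 \<and> h (x - y) \<noteq> 0}"
  have fin: "finite ?K" using fin_conv assms by auto
  have "nmul f (\<lambda>y. g y - h y) x = (\<Sum>y\<in>?K. f y * (g (x - y) - h (x - y)))"
    by (rule nmul_superset[OF fin]) auto
  also have "\<dots> = (\<Sum>y\<in>?K. f y * g (x - y)) - (\<Sum>y\<in>?K. f y * h (x - y))"
    by (simp add: right_diff_distrib sum_subtractf)
  also have "\<dots> = nmul f g x - nmul f h x"
    by (simp add: nmul_superset[OF fin])
  finally show ?thesis .
qed

lemma nmul_add_left: assumes "f \<in> novikov" "g \<in> novikov" "h \<in> novikov"
  shows "nmul (\<lambda>y. f y + h y) g x = nmul f g x + nmul h g x"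
proof -
  let ?K = "{y. f y \<noteq> 0 \<and> g (x - y) \<noteq> 0} \<union> {y. h y \<noteq> 0 \<and> g (x - y) \<noteq> 0}"
  have fin: "finite ?K" using fin_conv assms by auto
  have "nmul (\<lambda>y. f y + h y) g x = (\<Sum>y\<in>?K. (f y + h y) * g (x - y))"
    by (rule nmul_superset[OF fin]) auto
  also have "\<dots> = (\<Sum>y\<in>?K. f y * g (x - y)) + (\<Sum>y\<in>?K. h y * g (x - y))"
    by (simp add: distrib_right sum.distrib)
  also have "\<dots> = nmul f g x + nmul h g x"
    by (simp add: nmul_superset[OF fin])
  finally show ?thesis .
qed

lemma nmul_diff_left: assumes "f \<in> novikov" "g \<in> novikov" "h \<in> novikov"
  shows "nmul (\<lambda>y. f y - h y) g x = nmul f g x - nmul h g x"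
proof -
  let ?K = "{y. f y \<noteq> 0 \<and> g (x - y) \<noteq> 0} \<union> {y. h y \<noteq> 0 \<and> g (x - y) \<noteq> 0}"
  have fin: "finite ?K" using fin_conv assms by auto
  have "nmul (\<lambda>y. f y - h y) g x = (\<Sum>y\<in>?K. (f y - h y) * g (x - y))"
    by (rule nmul_superset[OF fin]) auto
  also have "\<dots> = (\<Sum>y\<in>?K. f y * g (x - y)) - (\<Sum>y\<in>?K. h y * g (x - y))"
    by (simp add: left_diff_distrib sum_subtractf)
  also have "\<dots> = nmul f g x - nmul h g x"
    by (simp add: nmul_superset[OF fin])
  finally show ?thesis .
qed

lemma nmul_none: "nmul none g x = g x"
proof (cases "g x = 0")
  case True
  have e: "{y. none y \<noteq> 0 \<and> g (x - y) \<noteq> 0} = {}" using True by (auto simp: none_def)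
  show ?thesis unfolding nmul_def e using True by simp
next
  case False
  have "{y. none y \<noteq> 0 \<and> g (x - y) \<noteq> 0} = {0}" using False by (auto simp: none_def)
  then show ?thesis by (simp add: nmul_def none_def)
qed

lemma nmul_shift: "nmul (\<lambda>y. c * f (y + s)) g x = c * nmul f g (x + s)"
proof (cases "c = 0")
  case True then show ?thesis by (simp add: nmul_def)
next
  case False
  let ?I = "{u. f u \<noteq> 0 \<and> g (x + s - u) \<noteq> 0}"
  have eq: "{y. c * f (y + s) \<noteq> 0 \<and> g (x - y) \<noteq> 0} = (\<lambda>u. u - s) ` ?I"
  proof
    show "{y. c * f (y + s) \<noteq> 0 \<and> g (x - y) \<noteq> 0} \<subseteq> (\<lambda>u. u - s) ` ?I"
    proof
      fix y assume "y \<in> {y. c * f (y + s) \<noteq> 0 \<and> g (x - y) \<noteq> 0}"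
      then show "y \<in> (\<lambda>u. u - s) ` ?I" by (intro image_eqI[of _ _ "y + s"]) (auto simp: algebra_simps)
    qed
  next
    show "(\<lambda>u. u - s) ` ?I \<subseteq> {y. c * f (y + s) \<noteq> 0 \<and> g (x - y) \<noteq> 0}"
      using False by (auto simp: algebra_simps)
  qed
  have "nmul (\<lambda>y. c * f (y + s)) g x = (\<Sum>u\<in>?I. c * f (u - s + s) * g (x - (u - s)))"
    unfolding nmul_def eq by (subst sum.reindex) (auto simp: inj_on_def)
  also have "\<dots> = c * (\<Sum>u\<in>?I. f u * g (x + s - u))"
    by (simp add: sum_distrib_left algebra_simps)
  also have "\<dots> = c * nmul f g (x + s)" by (simp add: nmul_def)
  finally show ?thesis .
qed

lemma npow_0[simp]: "npow f 0 = none" by (simp add: npow_def)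
lemma npow_Suc: "npow f (Suc n) = nmul f (npow f n)" by (simp add: npow_def)

lemma npow_nov: "f \<in> novikov \<Longrightarrow> npow f n \<in> novikov"
  by (induction n) (auto simp: npow_Suc intro: nov_mul)

lemma npow_lb: assumes "lb e f" shows "lb (real n * e) (npow f n)"
proof (induction n)
  case 0 then show ?case using lb_none by simp
next
  case (Suc n)
  have "lb (e + real n * e) (npow f (Suc n))" unfolding npow_Suc by (rule lb_mul[OF assms Suc])
  then show ?case by (simp add: algebra_simps)
qed

lemma pow_diff:
  assumes "z \<in> novikov" "w \<in> novikov" "lb e z" "lb e w" "lb r (\<lambda>x. z x - w x)"
  shows "lb (r + (real n - 1) * e) (\<lambda>x. npow z n x - npow w n x)"
proof (induction n)
  case 0 then show ?case by (intro lb_zero) simp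
next
  case (Suc n)
  have nz: "npow z n \<in> novikov" "npow w n \<in> novikov" using assms npow_nov by auto
  have eq: "(\<lambda>x. npow z (Suc n) x - npow w (Suc n) x) =
    (\<lambda>x. nmul (\<lambda>y. z y - w y) (npow z n) x + nmul w (\<lambda>y. npow z n y - npow w n y) x)"
  proof
    fix x
    show "npow z (Suc n) x - npow w (Suc n) x =
      nmul (\<lambda>y. z y - w y) (npow z n) x + nmul w (\<lambda>y. npow z n y - npow w n y) x"
      unfolding npow_Suc nmul_diff_left[OF assms(1) nz(1) assms(2)] nmul_diff_right[OF assms(2) nz]
      by simp
  qed
  have l1: "lb (r + real n * e) (nmul (\<lambda>y. z y - w y) (npow z n))"
    by (rule lb_mul[OF assms(5) npow_lb[OF assms(3)]])
  have l2: "lb (e + (r + (real n - 1) * e)) (nmul w (\<lambda>y. npow z n y - npow w n y))"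
    by (rule lb_mul[OF assms(4) Suc])
  have "lb (min (r + real n * e) (e + (r + (real n - 1) * e))) (\<lambda>x. npow z (Suc n) x - npow w (Suc n) x)"
    unfolding eq by (rule lb_add[OF l1 l2])
  then show ?case by (rule lb_mono) (simp add: algebra_simps)
qed

lemma nsuminf_nz: assumes "nsuminf t x \<noteq> 0" shows "\<exists>i. t i x \<noteq> 0"
proof (rule ccontr)
  assume "\<not> ?thesis"
  then have e: "{i. t i x \<noteq> 0} = {}" by auto
  have "nsuminf t x = 0" unfolding nsuminf_def e by simp
  then show False using assms by simp
qed

lemma lb_nsuminf: "(\<And>i. lb B (t i)) \<Longrightarrow> lb B (nsuminf t)"
  unfolding lb_def using nsuminf_nz by metis

lemma nsuminf_superset: assumes "finite K" "\<And>i. t i x \<noteq> 0 \<Longrightarrow> i \<in> K"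
  shows "nsuminf t x = (\<Sum>i\<in>K. t i x)"
  unfolding nsuminf_def using assms by (intro sum.mono_neutral_left) auto

definition nterm :: "(nat \<times> nat \<Rightarrow> nov) \<Rightarrow> nov \<Rightarrow> nov \<Rightarrow> nat \<times> nat \<Rightarrow> nov" where
  "nterm lam z1 z2 v = (if 2 \<le> fst v + snd v
      then nmul (lam v) (nmul (npow z1 (fst v)) (npow z2 (snd v))) else nzero)"

lemma nser_eq: "nser lam z1 z2 = nsuminf (nterm lam z1 z2)"
  unfolding nser_def nterm_def by simp

lemma nterm_lb: assumes "\<And>v. 2 \<le> fst v + snd v \<Longrightarrow> lb P (lam v)" "lb e z1" "lb e z2"
  shows "lb (P + real (fst v + snd v) * e) (nterm lam z1 z2 v)"
proof (cases "2 \<le> fst v + snd v")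
  case True
  have "lb (P + (real (fst v) * e + real (snd v) * e)) (nterm lam z1 z2 v)"
    unfolding nterm_def using True
    by (simp add: lb_mul assms npow_lb)
  then show ?thesis by (simp add: algebra_simps)
next
  case False then show ?thesis by (intro lb_zero) (simp add: nterm_def nzero_def)
qed

lemma nterm_nov: assumes "\<And>v. 2 \<le> fst v + snd v \<Longrightarrow> lam v \<in> novikov" "z1 \<in> novikov" "z2 \<in> novikov"
  shows "nterm lam z1 z2 v \<in> novikov"
  using assms(1)[of v] nov_mul[OF _ nov_mul[OF npow_nov[OF assms(2)] npow_nov[OF assms(3)]]]
  unfolding nterm_def by simp

lemma le_natceil: "real k \<le> y \<Longrightarrow> k \<le> nat \<lceil>y\<rceil>"
  by (metis ceiling_mono ceiling_of_nat nat_int nat_mono)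

lemma nterm_K:
  assumes "lb (P + real (fst v + snd v) * e) (nterm lam z1 z2 v)" "P \<ge> 0" "e > 0"
    "nterm lam z1 z2 v x \<noteq> 0" "x \<le> R"
  shows "v \<in> {..nat \<lceil>R / e\<rceil>} \<times> {..nat \<lceil>R / e\<rceil>}"
proof -
  have "P + real (fst v + snd v) * e \<le> x" using assms(1,4) by (auto simp: lb_def)
  then have h: "real (fst v + snd v) * e \<le> R" using assms by linarith
  have "real (fst v) * e \<le> real (fst v + snd v) * e" "real (snd v) * e \<le> real (fst v + snd v) * e"
    using assms(3) by (auto intro!: mult_right_mono)
  then have "real (fst v) * e \<le> R" "real (snd v) * e \<le> R" using h by linarith+
  then have "real (fst v) \<le> R / e" "real (snd v) \<le> R / e"
    using assms(3) by (auto simp: pos_le_divide_eq)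
  then show ?thesis by (cases v) (auto intro!: le_natceil)
qed

lemma nser_nov:
  assumes "\<And>v. 2 \<le> fst v + snd v \<Longrightarrow> lam v \<in> novikov \<and> lb P (lam v)" "P \<ge> 0" "e > 0"
    "z1 \<in> novikov" "z2 \<in> novikov" "lb e z1" "lb e z2"
  shows "nser lam z1 z2 \<in> novikov"
proof -
  have tl: "lb (P + real (fst v + snd v) * e) (nterm lam z1 z2 v)" for v
    by (rule nterm_lb) (use assms in auto)
  have tn: "nterm lam z1 z2 v \<in> novikov" for v
    by (rule nterm_nov) (use assms in auto)
  let ?S = "\<lambda>R. \<Union>v\<in>{..nat \<lceil>R / e\<rceil>} \<times> {..nat \<lceil>R / e\<rceil>}. {x. nterm lam z1 z2 v x \<noteq> 0 \<and> x \<le> R}"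
  show ?thesis
  proof (rule novI2[of _ ?S])
    fix R
    show "{x. nser lam z1 z2 x \<noteq> 0 \<and> x \<le> R} \<subseteq> ?S R"
    proof
      fix x assume "x \<in> {x. nser lam z1 z2 x \<noteq> 0 \<and> x \<le> R}"
      then have x: "nsuminf (nterm lam z1 z2) x \<noteq> 0" "x \<le> R" by (auto simp: nser_eq)
      then obtain v where v: "nterm lam z1 z2 v x \<noteq> 0" using nsuminf_nz by blast
      have "v \<in> {..nat \<lceil>R / e\<rceil>} \<times> {..nat \<lceil>R / e\<rceil>}"
        by (rule nterm_K[OF tl assms(2,3) v x(2)])
      then show "x \<in> ?S R" using v x by blast
    qed
    show "finite (?S R)"
      using tn by (intro finite_UN_I) (auto simp: novikov_def)
  qed
qed

lemma nser_lb:
  assumes "\<And>v. 2 \<le> fst v + snd v \<Longrightarrow> lb P (lam v)" "e \<ge> 0" "lb e z1" "lb e z2"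
  shows "lb (P + 2 * e) (nser lam z1 z2)"
  unfolding nser_eq
proof (rule lb_nsuminf)
  fix v
  show "lb (P + 2 * e) (nterm lam z1 z2 v)"
  proof (cases "2 \<le> fst v + snd v")
    case True
    have "lb (P + real (fst v + snd v) * e) (nterm lam z1 z2 v)"
      by (rule nterm_lb) (use assms in auto)
    moreover have "2 * e \<le> real (fst v + snd v) * e"
      using True assms(2) by (intro mult_right_mono) auto
    ultimately show ?thesis by (elim lb_mono) linarith
  next
    case False then show ?thesis by (intro lb_zero) (simp add: nterm_def nzero_def)
  qed
qed

lemma nterm_diff:
  assumes e: "e > 0"
    and z: "z1 \<in> novikov" "z2 \<in> novikov" "w1 \<in> novikov" "w2 \<in> novikov"
    "lb e z1" "lb e z2" "lb e w1" "lb e w2"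
    and r: "lb r1 (\<lambda>x. z1 x - w1 x)" "lb r2 (\<lambda>x. z2 x - w2 x)"
    and L: "\<And>v. 2 \<le> fst v + snd v \<Longrightarrow> lam v \<in> novikov"
    and P: "\<And>i j. 2 \<le> i + j \<Longrightarrow> 1 \<le> i \<Longrightarrow> lb P (lam (i, j))"
    and Q: "\<And>i j. 2 \<le> i + j \<Longrightarrow> 1 \<le> j \<Longrightarrow> lb Q (lam (i, j))"
  shows "lb (min (P + e + r1) (Q + e + r2)) (\<lambda>x. nterm lam z1 z2 v x - nterm lam w1 w2 v x)"
proof (cases "2 \<le> fst v + snd v")
  case False then show ?thesis by (intro lb_zero) (simp add: nterm_def)
next
  case True
  obtain i j where v: "v = (i, j)" by (cases v)
  have ij: "2 \<le> i + j" using True v by simp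
  let ?L = "lam (i, j)"
  let ?p = "npow z1 i" let ?q = "npow z2 j" let ?p' = "npow w1 i" let ?q' = "npow w2 j"
  have Ln: "?L \<in> novikov" using L ij by simp
  have pn: "?p \<in> novikov" "?q \<in> novikov" "?p' \<in> novikov" "?q' \<in> novikov"
    using z npow_nov by auto
  define T1 where "T1 = nmul (\<lambda>y. ?p y - ?p' y) ?q"
  define T2 where "T2 = nmul ?p' (\<lambda>y. ?q y - ?q' y)"
  have T1n: "T1 \<in> novikov" unfolding T1_def by (intro nov_mul nov_diff pn)
  have T2n: "T2 \<in> novikov" unfolding T2_def by (intro nov_mul nov_diff pn)
  have eqX: "(\<lambda>y. nmul ?p ?q y - nmul ?p' ?q' y) = (\<lambda>y. T1 y + T2 y)"
  proof
    fix y show "nmul ?p ?q y - nmul ?p' ?q' y = T1 y + T2 y"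
      unfolding T1_def T2_def nmul_diff_left[OF pn(1) pn(2) pn(3)] nmul_diff_right[OF pn(3) pn(2) pn(4)]
      by simp
  qed
  have eq: "(\<lambda>x. nterm lam z1 z2 v x - nterm lam w1 w2 v x) = (\<lambda>x. nmul ?L T1 x + nmul ?L T2 x)"
  proof
    fix x
    have "nterm lam z1 z2 v x - nterm lam w1 w2 v x = nmul ?L (nmul ?p ?q) x - nmul ?L (nmul ?p' ?q') x"
      using True v by (simp add: nterm_def)
    also have "\<dots> = nmul ?L (\<lambda>y. nmul ?p ?q y - nmul ?p' ?q' y) x"
      by (rule nmul_diff_right[symmetric]) (intro Ln nov_mul pn)+
    also have "\<dots> = nmul ?L T1 x + nmul ?L T2 x"
      unfolding eqX by (rule nmul_add_right[OF Ln T1n T2n])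
    finally show "nterm lam z1 z2 v x - nterm lam w1 w2 v x = nmul ?L T1 x + nmul ?L T2 x" .
  qed
  have b1: "lb (P + e + r1) (nmul ?L T1)"
  proof (cases "i = 0")
    case True
    have "T1 = (\<lambda>_. 0)" unfolding T1_def using True by (simp add: nmul_zero_left fun_eq_iff)
    then show ?thesis by (intro lb_zero) (simp add: nmul_zero_right)
  next
    case False
    have "lb (P + ((r1 + (real i - 1) * e) + real j * e)) (nmul ?L T1)"
      unfolding T1_def
      by (intro lb_mul P pow_diff npow_lb) (use ij False z r in auto)
    moreover have "1 * e \<le> (real i - 1 + real j) * e"
      using ij e by (intro mult_right_mono) auto
    ultimately show ?thesis by (elim lb_mono) (simp add: algebra_simps)
  qed
  have b2: "lb (Q + e + r2) (nmul ?L T2)"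
  proof (cases "j = 0")
    case True
    have "T2 = (\<lambda>_. 0)" unfolding T2_def using True by (simp add: nmul_zero_right fun_eq_iff)
    then show ?thesis by (intro lb_zero) (simp add: nmul_zero_right)
  next
    case False
    have "lb (Q + (real i * e + (r2 + (real j - 1) * e))) (nmul ?L T2)"
      unfolding T2_def
      by (intro lb_mul Q pow_diff npow_lb) (use ij False z r in auto)
    moreover have "1 * e \<le> (real i - 1 + real j) * e"
      using ij e by (intro mult_right_mono) auto
    ultimately show ?thesis by (elim lb_mono) (simp add: algebra_simps)
  qed
  show ?thesis unfolding eq by (rule lb_add[OF b1 b2])
qed

lemma nser_diff:
  assumes e: "e > 0"
    and z: "z1 \<in> novikov" "z2 \<in> novikov" "w1 \<in> novikov" "w2 \<in> novikov"
    "lb e z1" "lb e z2" "lb e w1" "lb e w2"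
    and r: "lb r1 (\<lambda>x. z1 x - w1 x)" "lb r2 (\<lambda>x. z2 x - w2 x)"
    and L: "\<And>v. 2 \<le> fst v + snd v \<Longrightarrow> lam v \<in> novikov \<and> lb 0 (lam v)"
    and P: "\<And>i j. 2 \<le> i + j \<Longrightarrow> 1 \<le> i \<Longrightarrow> lb P (lam (i, j))"
    and Q: "\<And>i j. 2 \<le> i + j \<Longrightarrow> 1 \<le> j \<Longrightarrow> lb Q (lam (i, j))"
  shows "lb (min (P + e + r1) (Q + e + r2)) (\<lambda>x. nser lam z1 z2 x - nser lam w1 w2 x)"
  unfolding lb_def
proof (intro allI impI)
  fix x assume nz: "nser lam z1 z2 x - nser lam w1 w2 x \<noteq> 0"
  let ?K = "{..nat \<lceil>x / e\<rceil>} \<times> {..nat \<lceil>x / e\<rceil>}"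
  have tlz: "lb (0 + real (fst v + snd v) * e) (nterm lam z1 z2 v)" for v
    by (rule nterm_lb) (use L z in auto)
  have tlw: "lb (0 + real (fst v + snd v) * e) (nterm lam w1 w2 v)" for v
    by (rule nterm_lb) (use L z in auto)
  have Kz: "v \<in> ?K" if "nterm lam z1 z2 v x \<noteq> 0" for v
    by (rule nterm_K[OF tlz _ e that]) auto
  have Kw: "v \<in> ?K" if "nterm lam w1 w2 v x \<noteq> 0" for v
    by (rule nterm_K[OF tlw _ e that]) auto
  have sz: "nsuminf (nterm lam z1 z2) x = (\<Sum>v\<in>?K. nterm lam z1 z2 v x)"
    by (rule nsuminf_superset[OF _ Kz]) simp_all
  have sw: "nsuminf (nterm lam w1 w2) x = (\<Sum>v\<in>?K. nterm lam w1 w2 v x)"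
    by (rule nsuminf_superset[OF _ Kw]) simp_all
  have "nser lam z1 z2 x - nser lam w1 w2 x = (\<Sum>v\<in>?K. nterm lam z1 z2 v x - nterm lam w1 w2 v x)"
    unfolding nser_eq sz sw by (simp add: sum_subtractf)
  with nz obtain v where v: "nterm lam z1 z2 v x - nterm lam w1 w2 v x \<noteq> 0"
    by (metis (no_types, lifting) sum.neutral)
  have "lb (min (P + e + r1) (Q + e + r2)) (\<lambda>x. nterm lam z1 z2 v x - nterm lam w1 w2 v x)"
    by (rule nterm_diff[OF e z r]) (use L P Q in auto)
  then show "min (P + e + r1) (Q + e + r2) \<le> x" using v by (auto simp: lb_def)
qed

lemma lb_all_zero: assumes "\<kappa> > 0" "\<And>n. lb (K + real n * \<kappa>) f" shows "f x = 0"
proof (rule ccontr)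
  assume nz: "f x \<noteq> 0"
  obtain n where n: "(x - K) / \<kappa> < real n" using reals_Archimedean2 by blast
  have "K + real n * \<kappa> \<le> x" using assms(2)[of n] nz by (auto simp: lb_def)
  moreover have "x - K < real n * \<kappa>" using n assms(1) by (simp add: pos_divide_less_eq)
  ultimately show False by linarith
qed

lemma complete:
  assumes k: "\<kappa> > 0" and u: "\<And>n. u n \<in> novikov" "\<And>n. lb e (u n)"
    and d: "\<And>n. lb (K + real n * \<kappa>) (\<lambda>x. u (Suc n) x - u n x)"
  shows "\<exists>w. w \<in> novikov \<and> lb e w \<and> (\<forall>n. lb (K + real n * \<kappa>) (\<lambda>x. w x - u n x))"
proof -
  have stab: "u (n + m) x = u n x" if "x < K + real n * \<kappa>" for n m x
  proof (induction m)
    case 0 then show ?case by simp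
  next
    case (Suc m)
    have "K + real n * \<kappa> \<le> K + real (n + m) * \<kappa>" using k by (intro add_left_mono mult_right_mono) auto
    then have "\<not> K + real (n + m) * \<kappa> \<le> x" using that by linarith
    then have "u (Suc (n + m)) x - u (n + m) x = 0" using d[of "n + m"] by (auto simp: lb_def)
    then show ?case using Suc by simp
  qed
  have stab2: "u n x = u m x" if "x < K + real n * \<kappa>" "x < K + real m * \<kappa>" for n m x
  proof (cases "n \<le> m")
    case True
    then have "u (n + (m - n)) x = u n x" using stab that(1) by blast
    then show ?thesis using True by simp
  next
    case False
    then have "u (m + (n - m)) x = u m x" using stab that(2) by blast
    then show ?thesis using False by simp
  qed
  define N where "N x = nat \<lceil>(x - K) / \<kappa>\<rceil> + 1" for x
  have NK: "x < K + real (N x) * \<kappa>" for x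
  proof -
    have "(x - K) / \<kappa> \<le> real (nat \<lceil>(x - K) / \<kappa>\<rceil>)" by (rule real_nat_ceiling_ge)
    then have "(x - K) / \<kappa> < real (N x)" unfolding N_def by simp
    then have "x - K < real (N x) * \<kappa>" using k by (simp add: pos_divide_less_eq)
    then show ?thesis by linarith
  qed
  define w where "w x = u (N x) x" for x
  have wu: "w x = u n x" if "x < K + real n * \<kappa>" for x n
    unfolding w_def using stab2[OF NK that] .
  have "w \<in> novikov"
  proof (rule novI2[of _ "\<lambda>R. {x. u (N R) x \<noteq> 0 \<and> x \<le> R}"])
    fix R
    show "{x. w x \<noteq> 0 \<and> x \<le> R} \<subseteq> {x. u (N R) x \<noteq> 0 \<and> x \<le> R}"
    proof
      fix x assume x: "x \<in> {x. w x \<noteq> 0 \<and> x \<le> R}"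
      then have "x < K + real (N R) * \<kappa>" using NK[of R] by auto
      then show "x \<in> {x. u (N R) x \<noteq> 0 \<and> x \<le> R}" using x wu by auto
    qed
    show "finite {x. u (N R) x \<noteq> 0 \<and> x \<le> R}" using u(1) by (simp add: novikov_def)
  qed
  moreover have "lb e w" using u(2) unfolding lb_def w_def by blast
  moreover have "lb (K + real n * \<kappa>) (\<lambda>x. w x - u n x)" for n
    unfolding lb_def
  proof (intro allI impI)
    fix x assume "w x - u n x \<noteq> 0"
    then show "K + real n * \<kappa> \<le> x" using wu[of x n] by force
  qed
  ultimately show ?thesis by blast
qed

definition Gm :: "complex \<Rightarrow> real \<Rightarrow> nov \<Rightarrow> nov \<Rightarrow> nov \<Rightarrow> nov" where
  "Gm \<alpha> A C F u = (\<lambda>x. u x + (1 / \<alpha>) * (C (x + A) - F (x + A)))"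

lemma gdiff:
  assumes n: "p \<in> novikov" "q \<in> novikov" "u \<in> novikov" "u' \<in> novikov" "v \<in> novikov" "v' \<in> novikov"
  shows "Gm \<alpha> A C (\<lambda>y. nmul p u y + nmul q v y + N y) u x - Gm \<alpha> A C (\<lambda>y. nmul p u' y + nmul q v' y + N' y) u' x
   = - nmul (\<lambda>y. (1 / \<alpha>) * p (y + A) - none y) (\<lambda>y. u y - u' y) x
     - nmul (\<lambda>y. (1 / \<alpha>) * q (y + A)) (\<lambda>y. v y - v' y) x - (1 / \<alpha>) * (N (x + A) - N' (x + A))"
proof -
  let ?ph = "\<lambda>y. (1 / \<alpha>) * p (y + A)"
  let ?qh = "\<lambda>y. (1 / \<alpha>) * q (y + A)"
  have phn: "?ph \<in> novikov" "?qh \<in> novikov" by (rule nov_shift[OF n(1)], rule nov_shift[OF n(2)])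
  have phn': "(\<lambda>y. ?ph y - none y) \<in> novikov" using phn by (intro nov_diff) auto
  have e1: "nmul (\<lambda>y. ?ph y - none y) (\<lambda>y. u y - u' y) x
      = nmul (\<lambda>y. ?ph y - none y) u x - nmul (\<lambda>y. ?ph y - none y) u' x"
    by (rule nmul_diff_right[OF phn' n(3,4)])
  have e2: "nmul (\<lambda>y. ?ph y - none y) u x = nmul ?ph u x - u x"
    using nmul_diff_left[OF phn(1) n(3) none_nov] nmul_none by simp
  have e3: "nmul (\<lambda>y. ?ph y - none y) u' x = nmul ?ph u' x - u' x"
    using nmul_diff_left[OF phn(1) n(4) none_nov] nmul_none by simp
  have e4: "nmul ?qh (\<lambda>y. v y - v' y) x = nmul ?qh v x - nmul ?qh v' x"
    by (rule nmul_diff_right[OF phn(2) n(5,6)])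
  show ?thesis
    unfolding e1 e2 e3 e4 nmul_shift Gm_def
    by (simp add: algebra_simps nmul_diff_right[OF n(2) n(5,6)] diff_divide_distrib)
qed

lemma comp_bound:
  assumes n: "p \<in> novikov" "q \<in> novikov" "u \<in> novikov" "u' \<in> novikov" "v \<in> novikov" "v' \<in> novikov"
    and th: "lb \<theta> (\<lambda>y. (1 / \<alpha>) * p (y + A) - none y)" and bq: "lb \<beta> q"
    and r: "lb r1 (\<lambda>x. u x - u' x)" "lb r2 (\<lambda>x. v x - v' x)" and bn: "lb Bn (\<lambda>x. N x - N' x)"
  shows "lb (min (min (\<theta> + r1) (\<beta> - A + r2)) (Bn - A))
    (\<lambda>x. Gm \<alpha> A C (\<lambda>y. nmul p u y + nmul q v y + N y) u x - Gm \<alpha> A C (\<lambda>y. nmul p u' y + nmul q v' y + N' y) u' x)"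
proof -
  have l1: "lb (\<theta> + r1) (\<lambda>x. - nmul (\<lambda>y. (1 / \<alpha>) * p (y + A) - none y) (\<lambda>y. u y - u' y) x)"
    by (intro lb_neg lb_mul th r)
  have l2: "lb (\<beta> - A + r2) (nmul (\<lambda>y. (1 / \<alpha>) * q (y + A)) (\<lambda>y. v y - v' y))"
    by (intro lb_mul lb_shift bq r)
  have l3: "lb (Bn - A) (\<lambda>x. (1 / \<alpha>) * (N (x + A) - N' (x + A)))"
    using lb_shift[OF bn, of A "1 / \<alpha>"] by simp
  show ?thesis
    unfolding gdiff[OF n] by (intro lb_diff l1 l2 l3)
qed

lemma comp_into:
  assumes n: "p \<in> novikov" "q \<in> novikov" "u \<in> novikov" "v \<in> novikov"
    and th: "lb \<theta> (\<lambda>y. (1 / \<alpha>) * p (y + A) - none y)" "\<theta> \<ge> 0" and bq: "lb \<beta> q" "\<beta> \<ge> A"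
    and r: "lb e u" "lb e v" and bn: "lb (A + 2 * e) N" and bc: "lb (A + e) C" and e: "e > 0"
  shows "lb e (Gm \<alpha> A C (\<lambda>y. nmul p u y + nmul q v y + N y) u)"
proof -
  let ?G0 = "Gm \<alpha> A C (\<lambda>y. nmul p (\<lambda>_. 0) y + nmul q (\<lambda>_. 0) y + (\<lambda>_. 0) y) (\<lambda>_. 0)"
  have g0: "?G0 = (\<lambda>x. (1 / \<alpha>) * C (x + A))"
    by (simp add: Gm_def nmul_zero_right)
  have l0: "lb (A + e - A) ?G0" unfolding g0 by (rule lb_shift[OF bc])
  have l1: "lb (min (min (\<theta> + e) (\<beta> - A + e)) (A + 2 * e - A))
     (\<lambda>x. Gm \<alpha> A C (\<lambda>y. nmul p u y + nmul q v y + N y) u x - ?G0 x)"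
    by (rule comp_bound) (use n r bn th bq in auto)
  have "lb (min (A + e - A) (min (min (\<theta> + e) (\<beta> - A + e)) (A + 2 * e - A)))
     (\<lambda>x. ?G0 x + (Gm \<alpha> A C (\<lambda>y. nmul p u y + nmul q v y + N y) u x - ?G0 x))"
    by (rule lb_add[OF l0 l1])
  moreover have "(\<lambda>x. ?G0 x + (Gm \<alpha> A C (\<lambda>y. nmul p u y + nmul q v y + N y) u x - ?G0 x))
     = Gm \<alpha> A C (\<lambda>y. nmul p u y + nmul q v y + N y) u" by (rule ext) simp
  ultimately have "lb (min (A + e - A) (min (min (\<theta> + e) (\<beta> - A + e)) (A + 2 * e - A)))
     (Gm \<alpha> A C (\<lambda>y. nmul p u y + nmul q v y + N y) u)" by simp
  then show ?thesis
    by (elim lb_mono) (use th bq e in auto)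
qed

lemma TL_iff: "x \<in> TLambda0 e \<longleftrightarrow> x \<in> novikov \<and> lb e x"
  by (auto simp: TLambda0_def lb_iff_nval)

lemma min_minus: "(x::real) \<le> min a b - c \<longleftrightarrow> x \<le> a - c \<and> x \<le> b - c"
  by (auto simp: min_def)

lemma Gm_nov: assumes "u \<in> novikov" "C \<in> novikov" "F \<in> novikov"
  shows "Gm \<alpha> A C F u \<in> novikov"
proof -
  have "(\<lambda>y. (1 / \<alpha>) * (\<lambda>x. C x - F x) (y + A)) \<in> novikov"
    by (rule nov_shift[OF nov_diff[OF assms(2,3)]])
  then have "(\<lambda>y. (1 / \<alpha>) * (C (y + A) - F (y + A))) \<in> novikov" by simp
  from nov_add[OF assms(1) this] show ?thesis unfolding Gm_def .
qed

lemma Gm_fix: "Gm \<alpha> A C F u = u \<longleftrightarrow> (\<alpha> = 0 \<or> C = F)"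
proof
  assume h: "Gm \<alpha> A C F u = u"
  show "\<alpha> = 0 \<or> C = F"
  proof (cases "\<alpha> = 0")
    case False
    have "C y = F y" for y
    proof -
      have "Gm \<alpha> A C F u (y - A) = u (y - A)" using h by simp
      then show ?thesis using False by (simp add: Gm_def)
    qed
    then show ?thesis by auto
  qed simp
next
  assume "\<alpha> = 0 \<or> C = F"
  then show "Gm \<alpha> A C F u = u" by (auto simp: Gm_def)
qed

lemma novF_eq: "novF a b c d lam eta z1 z2 =
   ((\<lambda>y. nmul a z1 y + nmul b z2 y + nser lam z1 z2 y), (\<lambda>y. nmul d z2 y + nmul c z1 y + nser eta z1 z2 y))"
  by (simp add: novF_def nadd_def fun_eq_iff add_ac)

theorem lemmaA1:
  fixes e :: real and a b c d C1 C2 :: nov and lam eta :: "nat \<times> nat \<Rightarrow> nov"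
  assumes "e > 0"
    and "a \<in> Lambda_plus" "b \<in> Lambda_plus" "c \<in> Lambda_plus" "d \<in> Lambda_plus"
    and "nadd (nmul a d) (\<lambda>x. - nmul b c x) \<noteq> nzero"
    and "nval a \<le> nval b" "nval a \<le> nval c" "nval d \<le> nval b" "nval d \<le> nval c"
    and "nval a + nval d < nval b + nval c"
    and "\<And>v. 2 \<le> fst v + snd v \<Longrightarrow> lam v \<in> novikov \<and> eta v \<in> novikov"
    and "\<And>v. 2 \<le> fst v + snd v \<Longrightarrow> nval (lam v) \<ge> nval a \<and> nval (eta v) \<ge> nval d"
    and "\<And>i j. 2 \<le> i + j \<Longrightarrow> j \<ge> 1 \<Longrightarrow> nval (lam (i, j)) \<ge> nval d"
    and "\<And>i j. 2 \<le> i + j \<Longrightarrow> i \<ge> 1 \<Longrightarrow> nval (eta (i, j)) \<ge> nval a"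
    and "C1 \<in> novikov" "C2 \<in> novikov"
    and "nval C1 > nval a + ereal e" "nval C2 > nval d + ereal e"
  shows "\<exists>!z. fst z \<in> TLambda0 e \<and> snd z \<in> TLambda0 e \<and>
           novF a b c d lam eta (fst z) (snd z) = (C1, C2)"
proof -
  note e = assms(1)
  have an: "a \<in> novikov" "b \<in> novikov" "c \<in> novikov" "d \<in> novikov"
    using assms(2-5) by (auto simp: Lambda_plus_def)
  have ap: "nval a > 0" "nval d > 0" "nval b > 0" "nval c > 0"
    using assms(2-5) by (auto simp: Lambda_plus_def)
  have "nval a \<noteq> \<infinity>"
  proof
    assume "nval a = \<infinity>"
    then have h: "nval a + nval d = \<infinity>" using ap by simp
    have "\<infinity> < nval b + nval c" using assms(11) unfolding h .
    then show False by simp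
  qed
  then obtain A where A: "nval a = ereal A" using ap by (cases "nval a") auto
  have "nval d \<noteq> \<infinity>"
  proof
    assume "nval d = \<infinity>"
    then have h: "nval a + nval d = \<infinity>" using ap by simp
    have "\<infinity> < nval b + nval c" using assms(11) unfolding h .
    then show False by simp
  qed
  then obtain D where D: "nval d = ereal D" using ap by (cases "nval d") auto
  have A0: "A > 0" "D > 0" using ap A D by auto
  define \<alpha> where "\<alpha> = a A"
  define \<delta> where "\<delta> = d D"
  have al: "\<alpha> \<noteq> 0" "lb A a" using nval_lead[OF an(1) A] unfolding \<alpha>_def by auto
  have dl: "\<delta> \<noteq> 0" "lb D d" using nval_lead[OF an(4) D] unfolding \<delta>_def by auto
  define \<beta> where "\<beta> = (if nval b = \<infinity> then A + D + 1 else real_of_ereal (nval b))"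
  define \<gamma> where "\<gamma> = (if nval c = \<infinity> then A + D + 1 else real_of_ereal (nval c))"
  have bfin: "nval b \<noteq> \<infinity> \<Longrightarrow> nval b = ereal \<beta>" using ap unfolding \<beta>_def by (cases "nval b") auto
  have cfin: "nval c \<noteq> \<infinity> \<Longrightarrow> nval c = ereal \<gamma>" using ap unfolding \<gamma>_def by (cases "nval c") auto
  have bl: "lb \<beta> b"
  proof (cases "nval b = \<infinity>")
    case True then show ?thesis using lb_iff_nval[of \<beta> b] by simp
  next
    case False then show ?thesis using lb_iff_nval[of \<beta> b] bfin by simp
  qed
  have cl: "lb \<gamma> c"
  proof (cases "nval c = \<infinity>")
    case True then show ?thesis using lb_iff_nval[of \<gamma> c] by simp
  next
    case False then show ?thesis using lb_iff_nval[of \<gamma> c] cfin by simp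
  qed
  have bA: "A \<le> \<beta>" "D \<le> \<beta>"
  proof -
    show "A \<le> \<beta>"
    proof (cases "nval b = \<infinity>")
      case True then show ?thesis using A0 unfolding \<beta>_def by simp
    next
      case False then show ?thesis using bfin assms(7) A by simp
    qed
    show "D \<le> \<beta>"
    proof (cases "nval b = \<infinity>")
      case True then show ?thesis using A0 unfolding \<beta>_def by simp
    next
      case False then show ?thesis using bfin assms(9) D by simp
    qed
  qed
  have cA: "A \<le> \<gamma>" "D \<le> \<gamma>"
  proof -
    show "A \<le> \<gamma>"
    proof (cases "nval c = \<infinity>")
      case True then show ?thesis using A0 unfolding \<gamma>_def by simp
    next
      case False then show ?thesis using cfin assms(8) A by simp
    qed
    show "D \<le> \<gamma>"
    proof (cases "nval c = \<infinity>")
      case True then show ?thesis using A0 unfolding \<gamma>_def by simp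
    next
      case False then show ?thesis using cfin assms(10) D by simp
    qed
  qed
  have ADbc: "A + D < \<beta> + \<gamma>"
  proof (cases "nval b = \<infinity> \<or> nval c = \<infinity>")
    case True
    then show ?thesis
    proof
      assume "nval b = \<infinity>" then show ?thesis using cA A0 unfolding \<beta>_def by simp
    next
      assume "nval c = \<infinity>" then show ?thesis using bA A0 unfolding \<gamma>_def by simp
    qed
  next
    case False
    then have "ereal A + ereal D < ereal \<beta> + ereal \<gamma>" using assms(11) A D bfin cfin by simp
    then show ?thesis by simp
  qed
  define am where "am = (\<lambda>y. (1 / \<alpha>) * a (y + A) - none y)"
  define dm where "dm = (\<lambda>y. (1 / \<delta>) * d (y + D) - none y)"
  have amn: "am \<in> novikov" unfolding am_def by (intro nov_diff nov_shift an none_nov)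
  have dmn: "dm \<in> novikov" unfolding dm_def by (intro nov_diff nov_shift an none_nov)
  have "lb (min (A - A) 0) am" unfolding am_def by (intro lb_diff lb_shift al lb_none)
  then have am0: "lb 0 am" by simp
  have "lb (min (D - D) 0) dm" unfolding dm_def by (intro lb_diff lb_shift dl lb_none)
  then have dm0: "lb 0 dm" by simp
  have "am 0 = 0" unfolding am_def \<alpha>_def using al(1) by (simp add: none_def \<alpha>_def)
  then obtain \<theta>a where tha: "\<theta>a > 0" "lb (0 + \<theta>a) am" using nov_gap[OF amn am0] by blast
  have "dm 0 = 0" unfolding dm_def \<delta>_def using dl(1) by (simp add: none_def \<delta>_def)
  then obtain \<theta>d where thd: "\<theta>d > 0" "lb (0 + \<theta>d) dm" using nov_gap[OF dmn dm0] by blast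
  have lamn: "lam v \<in> novikov" "eta v \<in> novikov" if "2 \<le> fst v + snd v" for v
    using assms(12) that by auto
  have lamA: "lb A (lam v)" if "2 \<le> fst v + snd v" for v
    using assms(13)[OF that] A lb_iff_nval by metis
  have etaD: "lb D (eta v)" if "2 \<le> fst v + snd v" for v
    using assms(13)[OF that] D lb_iff_nval by metis
  have lamD: "lb D (lam (i, j))" if "2 \<le> i + j" "1 \<le> j" for i j
    using assms(14)[OF that] D lb_iff_nval by metis
  have etaA: "lb A (eta (i, j))" if "2 \<le> i + j" "1 \<le> i" for i j
    using assms(15)[OF that] A lb_iff_nval by metis
  have lamA': "lb A (lam (i, j))" if "2 \<le> i + j" "1 \<le> i" for i j
    using lamA[of "(i, j)"] that by simp
  have etaD': "lb D (eta (i, j))" if "2 \<le> i + j" "1 \<le> j" for i j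
    using etaD[of "(i, j)"] that by simp
  have lam0: "lam v \<in> novikov \<and> lb 0 (lam v)" "eta v \<in> novikov \<and> lb 0 (eta v)"
    if "2 \<le> fst v + snd v" for v
    using lamn[OF that] lamA[OF that] etaD[OF that] A0 lb_mono by auto
  have C1l: "lb (A + e) C1"
  proof -
    have "ereal (A + e) \<le> nval C1" using assms(18) A by simp
    then show ?thesis using lb_iff_nval by blast
  qed
  have C2l: "lb (D + e) C2"
  proof -
    have "ereal (D + e) \<le> nval C2" using assms(19) D by simp
    then show ?thesis using lb_iff_nval by blast
  qed
  define lo where "lo = max (A - \<beta>) (A - D - e)"
  define hi where "hi = min (\<gamma> - D) (A - D + e)"
  have lohi: "lo < hi" unfolding lo_def hi_def using ADbc bA cA e by auto
  define t where "t = (lo + hi) / 2"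
  define \<kappa> where "\<kappa> = min (min \<theta>a \<theta>d) (min e ((hi - lo) / 2))"
  have k0: "\<kappa> > 0" unfolding \<kappa>_def using tha thd e lohi by auto
  have kb4: "\<kappa> \<le> (hi - lo) / 2" unfolding \<kappa>_def by (rule min.coboundedI2, rule min.cobounded2)
  have kb: "\<kappa> \<le> \<theta>a" "\<kappa> \<le> \<theta>d" "\<kappa> \<le> e" "\<kappa> \<le> (hi - lo) / 2" using kb4 unfolding \<kappa>_def by auto
  have lob: "A - \<beta> \<le> lo" "A - D - e \<le> lo" unfolding lo_def by auto
  have hib: "hi \<le> \<gamma> - D" "hi \<le> A - D + e" unfolding hi_def by auto
  have tb1: "\<kappa> \<le> \<beta> - A + t" using kb lob hib unfolding t_def by (simp add: field_simps)
  have tb2: "\<kappa> \<le> D - A + e + t" using kb lob hib unfolding t_def by (simp add: field_simps)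
  have tb3: "\<kappa> \<le> \<gamma> - D - t" using kb lob hib unfolding t_def by (simp add: field_simps)
  have tb4: "\<kappa> \<le> A - D + e - t" using kb lob hib unfolding t_def by (simp add: field_simps)
  note tb = tb1 tb2 tb3 tb4
  define G1 where "G1 z1 z2 = Gm \<alpha> A C1 (\<lambda>y. nmul a z1 y + nmul b z2 y + nser lam z1 z2 y) z1" for z1 z2
  define G2 where "G2 z1 z2 = Gm \<delta> D C2 (\<lambda>y. nmul d z2 y + nmul c z1 y + nser eta z1 z2 y) z2" for z1 z2
  have contr: "lb (r + \<kappa> - t) (\<lambda>x. G1 z1 z2 x - G1 w1 w2 x) \<and> lb (r + \<kappa>) (\<lambda>x. G2 z1 z2 x - G2 w1 w2 x)"
    if z: "z1 \<in> novikov" "z2 \<in> novikov" "w1 \<in> novikov" "w2 \<in> novikov"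
      "lb e z1" "lb e z2" "lb e w1" "lb e w2"
      and r: "lb (r - t) (\<lambda>x. z1 x - w1 x)" "lb r (\<lambda>x. z2 x - w2 x)" for z1 z2 w1 w2 r
  proof
    have n1: "lb (min (A + e + (r - t)) (D + e + r)) (\<lambda>x. nser lam z1 z2 x - nser lam w1 w2 x)"
      by (rule nser_diff[OF e z r]) (use lam0 lamA' lamD in auto)
    have n2: "lb (min (A + e + (r - t)) (D + e + r)) (\<lambda>x. nser eta z1 z2 x - nser eta w1 w2 x)"
      by (rule nser_diff[OF e z r]) (use lam0 etaA etaD' in auto)
    have "lb (min (min (\<theta>a + (r - t)) (\<beta> - A + r)) (min (A + e + (r - t)) (D + e + r) - A))
      (\<lambda>x. G1 z1 z2 x - G1 w1 w2 x)"
      unfolding G1_def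
      by (rule comp_bound[OF an(1) an(2) z(1,3,2,4) _ bl r n1]) (use tha in \<open>simp add: am_def\<close>)
    then show "lb (r + \<kappa> - t) (\<lambda>x. G1 z1 z2 x - G1 w1 w2 x)"
      by (elim lb_mono) (use kb tb in \<open>unfold min.bounded_iff min_minus, (intro conjI; linarith)\<close>)
    have "lb (min (min (\<theta>d + r) (\<gamma> - D + (r - t))) (min (A + e + (r - t)) (D + e + r) - D))
      (\<lambda>x. G2 z1 z2 x - G2 w1 w2 x)"
      unfolding G2_def
      by (rule comp_bound[OF an(4) an(3) z(2,4,1,3) _ cl r(2,1) n2]) (use thd in \<open>simp add: dm_def\<close>)
    then show "lb (r + \<kappa>) (\<lambda>x. G2 z1 z2 x - G2 w1 w2 x)"
      by (elim lb_mono) (use kb tb in \<open>unfold min.bounded_iff min_minus, (intro conjI; linarith)\<close>)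
  qed
  have nsern: "nser lam z1 z2 \<in> novikov" "nser eta z1 z2 \<in> novikov"
    if "z1 \<in> novikov" "z2 \<in> novikov" "lb e z1" "lb e z2" for z1 z2
  proof -
    show "nser lam z1 z2 \<in> novikov" by (rule nser_nov[of lam 0 e]) (use lam0 e that in auto)
    show "nser eta z1 z2 \<in> novikov" by (rule nser_nov[of eta 0 e]) (use lam0 e that in auto)
  qed
  have into: "G1 z1 z2 \<in> novikov \<and> lb e (G1 z1 z2) \<and> G2 z1 z2 \<in> novikov \<and> lb e (G2 z1 z2)"
    if z: "z1 \<in> novikov" "z2 \<in> novikov" "lb e z1" "lb e z2" for z1 z2
  proof (intro conjI)
    have F1n: "(\<lambda>y. nmul a z1 y + nmul b z2 y + nser lam z1 z2 y) \<in> novikov"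
      using nov_add[OF nov_add[OF nov_mul[OF an(1) z(1)] nov_mul[OF an(2) z(2)]] nsern(1)[OF z]] .
    have F2n: "(\<lambda>y. nmul d z2 y + nmul c z1 y + nser eta z1 z2 y) \<in> novikov"
      using nov_add[OF nov_add[OF nov_mul[OF an(4) z(2)] nov_mul[OF an(3) z(1)]] nsern(2)[OF z]] .
    show "G1 z1 z2 \<in> novikov" unfolding G1_def by (rule Gm_nov[OF z(1) assms(16) F1n])
    show "G2 z1 z2 \<in> novikov" unfolding G2_def by (rule Gm_nov[OF z(2) assms(17) F2n])
    have nl1: "lb (A + 2 * e) (nser lam z1 z2)" by (rule nser_lb) (use lamA e z in auto)
    have nl2: "lb (D + 2 * e) (nser eta z1 z2)" by (rule nser_lb) (use etaD e z in auto)
    show "lb e (G1 z1 z2)" unfolding G1_def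
      by (rule comp_into[OF an(1) an(2) z(1,2) _ _ bl bA(1) z(3,4) nl1 C1l e, of \<theta>a])
         (use tha in \<open>auto simp: am_def\<close>)
    show "lb e (G2 z1 z2)" unfolding G2_def
      by (rule comp_into[OF an(4) an(3) z(2,1) _ _ cl cA(2) z(4,3) nl2 C2l e, of \<theta>d])
         (use thd in \<open>auto simp: dm_def\<close>)
  qed
  define r0 where "r0 = e + min t 0"
  have r0b: "r0 - t \<le> e" "r0 \<le> e" unfolding r0_def by auto
  define Gp where "Gp = (\<lambda>z. (G1 (fst z) (snd z), G2 (fst z) (snd z)))"
  define zs where "zs n = (Gp ^^ n) (\<lambda>_. 0, \<lambda>_. 0)" for n
  have zs_Suc: "fst (zs (Suc n)) = G1 (fst (zs n)) (snd (zs n))" "snd (zs (Suc n)) = G2 (fst (zs n)) (snd (zs n))" for n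
    by (simp_all add: zs_def Gp_def)
  have zsS: "fst (zs n) \<in> novikov \<and> snd (zs n) \<in> novikov \<and> lb e (fst (zs n)) \<and> lb e (snd (zs n))" for n
  proof (induction n)
    case 0 then show ?case by (auto simp: zs_def intro: lb_zero)
  next
    case (Suc n) then show ?case using into[of "fst (zs n)" "snd (zs n)"] zs_Suc by auto
  qed
  have zsd: "lb (r0 - t + real n * \<kappa>) (\<lambda>x. fst (zs (Suc n)) x - fst (zs n) x) \<and>
             lb (r0 + real n * \<kappa>) (\<lambda>x. snd (zs (Suc n)) x - snd (zs n) x)" for n
  proof (induction n)
    case 0
    have z0: "fst (zs 0) = (\<lambda>_. 0)" "snd (zs 0) = (\<lambda>_. 0)" by (simp_all add: zs_def)
    have "lb (min e e) (\<lambda>x. fst (zs (Suc 0)) x - fst (zs 0) x)"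
      using zsS[of 1] by (intro lb_diff) (auto simp: z0 intro: lb_zero)
    moreover have "lb (min e e) (\<lambda>x. snd (zs (Suc 0)) x - snd (zs 0) x)"
      using zsS[of 1] by (intro lb_diff) (auto simp: z0 intro: lb_zero)
    ultimately show ?case using r0b by (auto elim: lb_mono)
  next
    case (Suc n)
    have h1: "lb (r0 + real n * \<kappa> - t) (\<lambda>x. fst (zs (Suc n)) x - fst (zs n) x)"
      using Suc by (auto elim: lb_mono)
    have h2: "lb (r0 + real n * \<kappa>) (\<lambda>x. snd (zs (Suc n)) x - snd (zs n) x)"
      using Suc by auto
    have c: "lb (r0 + real n * \<kappa> + \<kappa> - t) (\<lambda>x. G1 (fst (zs (Suc n))) (snd (zs (Suc n))) x - G1 (fst (zs n)) (snd (zs n)) x) \<and>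
          lb (r0 + real n * \<kappa> + \<kappa>) (\<lambda>x. G2 (fst (zs (Suc n))) (snd (zs (Suc n))) x - G2 (fst (zs n)) (snd (zs n)) x)"
      by (rule contr) (use zsS h1 h2 in auto)
    have eq1: "(\<lambda>x. fst (zs (Suc (Suc n))) x - fst (zs (Suc n)) x) =
      (\<lambda>x. G1 (fst (zs (Suc n))) (snd (zs (Suc n))) x - G1 (fst (zs n)) (snd (zs n)) x)"
      by (simp only: zs_Suc)
    have eq2: "(\<lambda>x. snd (zs (Suc (Suc n))) x - snd (zs (Suc n)) x) =
      (\<lambda>x. G2 (fst (zs (Suc n))) (snd (zs (Suc n))) x - G2 (fst (zs n)) (snd (zs n)) x)"
      by (simp only: zs_Suc)
    show ?case unfolding eq1 eq2
      using c by (auto elim!: lb_mono simp: algebra_simps)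
  qed
  obtain w1 where w1: "w1 \<in> novikov" "lb e w1" "\<And>n. lb (r0 - t + real n * \<kappa>) (\<lambda>x. w1 x - fst (zs n) x)"
    using complete[OF k0, of "\<lambda>n. fst (zs n)" e "r0 - t"] zsS zsd by blast
  obtain w2 where w2: "w2 \<in> novikov" "lb e w2" "\<And>n. lb (r0 + real n * \<kappa>) (\<lambda>x. w2 x - snd (zs n) x)"
    using complete[OF k0, of "\<lambda>n. snd (zs n)" e "r0"] zsS zsd by blast
  have fixw: "lb (r0 - t + real n * \<kappa>) (\<lambda>x. G1 w1 w2 x - w1 x) \<and> lb (r0 + real n * \<kappa>) (\<lambda>x. G2 w1 w2 x - w2 x)" for n
  proof -
    have h1: "lb (r0 + real n * \<kappa> - t) (\<lambda>x. w1 x - fst (zs n) x)" using w1(3)[of n] by (auto elim: lb_mono)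
    have c: "lb (r0 + real n * \<kappa> + \<kappa> - t) (\<lambda>x. G1 w1 w2 x - G1 (fst (zs n)) (snd (zs n)) x) \<and>
          lb (r0 + real n * \<kappa> + \<kappa>) (\<lambda>x. G2 w1 w2 x - G2 (fst (zs n)) (snd (zs n)) x)"
      by (rule contr) (use zsS h1 w1 w2 in auto)
    have "lb (min (min (r0 + real n * \<kappa> + \<kappa> - t) (r0 - t + real n * \<kappa>)) (r0 - t + real n * \<kappa>))
      (\<lambda>x. ((G1 w1 w2 x - G1 (fst (zs n)) (snd (zs n)) x) + (fst (zs (Suc n)) x - fst (zs n) x)) + - (w1 x - fst (zs n) x))"
      by (intro lb_add lb_neg) (use c zsd w1 in auto)
    moreover have "lb (min (min (r0 + real n * \<kappa> + \<kappa>) (r0 + real n * \<kappa>)) (r0 + real n * \<kappa>))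
      (\<lambda>x. ((G2 w1 w2 x - G2 (fst (zs n)) (snd (zs n)) x) + (snd (zs (Suc n)) x - snd (zs n) x)) + - (w2 x - snd (zs n) x))"
      by (intro lb_add lb_neg) (use c zsd w2 in auto)
    ultimately show ?thesis unfolding zs_Suc using k0 by (auto elim!: lb_mono)
  qed
  have G1w: "G1 w1 w2 = w1"
  proof
    fix x show "G1 w1 w2 x = w1 x" using lb_all_zero[OF k0, of "r0 - t" "\<lambda>x. G1 w1 w2 x - w1 x" x] fixw by simp
  qed
  have G2w: "G2 w1 w2 = w2"
  proof
    fix x show "G2 w1 w2 x = w2 x" using lb_all_zero[OF k0, of "r0" "\<lambda>x. G2 w1 w2 x - w2 x" x] fixw by simp
  qed
  have solw: "novF a b c d lam eta w1 w2 = (C1, C2)"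
    using G1w G2w al(1) dl(1) unfolding G1_def G2_def Gm_fix novF_eq by simp
  have uniq: "z1 = w1' \<and> z2 = w2'"
    if z: "z1 \<in> novikov" "z2 \<in> novikov" "w1' \<in> novikov" "w2' \<in> novikov"
      "lb e z1" "lb e z2" "lb e w1'" "lb e w2'"
      and s: "novF a b c d lam eta z1 z2 = (C1, C2)" "novF a b c d lam eta w1' w2' = (C1, C2)"
    for z1 z2 w1' w2'
  proof -
    have fz: "G1 z1 z2 = z1" "G2 z1 z2 = z2" using s(1) unfolding G1_def G2_def Gm_fix novF_eq by auto
    have fw: "G1 w1' w2' = w1'" "G2 w1' w2' = w2'" using s(2) unfolding G1_def G2_def Gm_fix novF_eq by auto
    have dd: "lb (r0 - t + real n * \<kappa>) (\<lambda>x. z1 x - w1' x) \<and> lb (r0 + real n * \<kappa>) (\<lambda>x. z2 x - w2' x)" for n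
    proof (induction n)
      case 0
      have "lb (min e e) (\<lambda>x. z1 x - w1' x)" "lb (min e e) (\<lambda>x. z2 x - w2' x)"
        using lb_diff[OF z(5,7)] lb_diff[OF z(6,8)] by auto
      then show ?case using r0b by (auto elim: lb_mono)
    next
      case (Suc n)
      have h1: "lb (r0 + real n * \<kappa> - t) (\<lambda>x. z1 x - w1' x)" using Suc by (auto elim: lb_mono)
      have c: "lb (r0 + real n * \<kappa> + \<kappa> - t) (\<lambda>x. G1 z1 z2 x - G1 w1' w2' x) \<and>
          lb (r0 + real n * \<kappa> + \<kappa>) (\<lambda>x. G2 z1 z2 x - G2 w1' w2' x)"
        by (rule contr) (use z h1 Suc in auto)
      then show ?case unfolding fz fw by (auto elim!: lb_mono simp: algebra_simps)
    qed
    have "z1 x = w1' x" for x using lb_all_zero[OF k0, of "r0 - t" "\<lambda>x. z1 x - w1' x" x] dd by simp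
    moreover have "z2 x = w2' x" for x using lb_all_zero[OF k0, of "r0" "\<lambda>x. z2 x - w2' x" x] dd by simp
    ultimately show ?thesis by auto
  qed
  show ?thesis
  proof (rule ex1I[of _ "(w1, w2)"])
    show "fst (w1, w2) \<in> TLambda0 e \<and> snd (w1, w2) \<in> TLambda0 e \<and> novF a b c d lam eta (fst (w1, w2)) (snd (w1, w2)) = (C1, C2)"
      using w1 w2 solw by (simp add: TL_iff)
  next
    fix z assume "fst z \<in> TLambda0 e \<and> snd z \<in> TLambda0 e \<and> novF a b c d lam eta (fst z) (snd z) = (C1, C2)"
    then have "fst z = w1 \<and> snd z = w2" using uniq[of "fst z" "snd z" w1 w2] w1 w2 solw by (auto simp: TL_iff)
    then show "z = (w1, w2)" by (simp add: prod_eq_iff)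
  qed
qed

end
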